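(* Let $b'>\delta$ be fixed. For a query $\mathbf Q=(\mathbf q,v)$ with $v\in(0,\infty)$, put $b=\sqrt{v/2}$, $P(\mathbf Q)=\frac{\gamma b'}{b(b'-\delta)}\sum_{i=1}^nc_i|q_i|$, $s_i=\gamma|q_i|$, $s_i'=\frac{\gamma b'\delta|q_i|}{b(b'-\delta)}$, and define the randomized price and micro-payments $\pi(\mathbf Q)=\mathcal K'_{\mathbf Q}(\mathbf c)=P(\mathbf Q)+\rho'$, and $\mu_i(\mathbf Q)=\left(\frac{s_i}{b}+\frac{s_i'}{b'}\right)c_i+\frac{\pi(\mathbf Q)-P(\mathbf Q)}{n}$ for $i=1,\ldots,n$. Then the framework is balanced in expectation, namely: (a) $\mathbf Q\mapsto\mathbb E[\pi(\mathbf Q)]$ is arbitrage-free; (b) for each $i$, if $q_i=0$ then $\mathbb E[\mu_i(\mathbf Q)]=0$; (c) for each $i$, $\mathbf Q\mapsto\mathbb E[\mu_i(\mathbf Q)]$ is arbitrage-free; (d) $\sum_{i=1}^n\mathbb E[\mu_i(\mathbf Q)]\le\mathbb E[\pi(\mathbf Q)]$ for every query $\mathbf Q$; (e) for each $i$ and every query $\mathbf Q$, $\mathbb E[\mu_i(\mathbf Q)]\ge c_i\,(\varepsilon_i(\mathcal K_{\mathbf Q})+\varepsilon_i(\mathcal K'_{\mathbf Q}))$.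
   Context: Fix a bounded $X\subseteq\mathbb R$, $\gamma=\sup_{x\in X}|x|$; data items $x_i\in X$, databases $\mathbf x\in X^n$. Each owner $i$ has a linear contract $W_i(\varepsilon)=c_i\varepsilon$ with constant $c_i\in Y$, where $Y\subseteq[0,\infty)$ is bounded and $\delta=\sup_{c\in Y}|c|$; $\mathbf c=(c_1,\ldots,c_n)\in Y^n$. For a vector $\mathbf z$, $\mathbf z^{(i)}$ denotes $\mathbf z$ with the $i$-th coordinate set to $0$. Queries are pairs $\mathbf Q=(\mathbf q,v)$ with $\mathbf q\in\mathbb R^n$, $v\in(0,\infty)$; $b=\sqrt{v/2}$. $\mathrm{Lap}(\beta)$ is the distribution with density $\frac{1}{2\beta}e^{-|t|/\beta}$. The query mechanism is $\mathcal K_{\mathbf Q}(\mathbf x)=\mathbf q\cdot\mathbf x+\rho$ with $\rho\sim\mathrm{Lap}(b)$; the price mechanism is $\mathcal K'_{\mathbf Q}(\mathbf c)=\frac{\gamma b'}{b(b'-\delta)}\sum_ic_i|q_i|+\rho'$ with $\rho'\sim\mathrm{Lap}(b')$, independent of $\rho$. Privacy losses: $\varepsilon_i(\mathcal K_{\mathbf Q})=\sup_{S,\mathbf x\in X^n}\left|\log\frac{\Pr[\mathcal K_{\mathbf Q}(\mathbf x)\in S]}{\Pr[\mathcal K_{\mathbf Q}(\mathbf x^{(i)})\in S]}\right|$ and $\varepsilon_i(\mathcal K'_{\mathbf Q})=\sup_{S,\mathbf c\in Y^n}\left|\log\frac{\Pr[\mathcal K'_{\mathbf Q}(\mathbf c)\in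 S]}{\Pr[\mathcal K'_{\mathbf Q}(\mathbf c^{(i)})\in S]}\right|$, suprema also over measurable $S\subseteq\mathbb R$. The determinacy relation $\mathbf S\rightarrow\mathbf Q$ is the smallest relation satisfying: (Summation) $\{(\mathbf q_1,v_1),\ldots,(\mathbf q_k,v_k)\}\rightarrow(\sum_j\mathbf q_j,\sum_jv_j)$; (Scalar multiplication) $\{(\mathbf q,v)\}\rightarrow(c\mathbf q,c^2v)$ for $c\in\mathbb R$; (Relaxation) $\{(\mathbf q,v)\}\rightarrow(\mathbf q,v')$ for $v\le v'$; (Transitivity) if $\mathbf S_j\rightarrow\mathbf Q_j$ for all $j$ and $\{\mathbf Q_1,\ldots,\mathbf Q_k\}\rightarrow\mathbf Q$ then $\mathbf S_1\uplus\cdots\uplus\mathbf S_k\rightarrow\mathbf Q$. A real function $g$ on queries with $v\in(0,\infty)$ is arbitrage-free if for every $m\ge1$ and such queries with $\{\mathbf Q_1,\ldots,\mathbf Q_m\}\rightarrow\mathbf Q$, $g(\mathbf Q)\le\sum_jg(\mathbf Q_j)$. *)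

theory Defs
  imports "HOL-Probability.Probability"
begin

text \<open>Data owners are indexed by a finite type 'n; n = CARD('n).
  A query is a pair (q, v) with q in R^n and v a real (the variance).\<close>

type_synonym 'n query = "(real ^ 'n) \<times> real"

definition gam :: "real set \<Rightarrow> real" where
  "gam X = (SUP x\<in>X. \<bar>x\<bar>)"

definition del :: "real set \<Rightarrow> real" where
  "del Y = (SUP c\<in>Y. \<bar>c\<bar>)"

definition lap_scale :: "real \<Rightarrow> real" where
  "lap_scale v = sqrt (v / 2)"

definition laplace :: "real \<Rightarrow> real measure" where
  "laplace \<beta> = density lborel (\<lambda>t. ennreal (exp (- \<bar>t\<bar> / \<beta>) / (2 * \<beta>)))"

definition zero_at :: "real ^ 'n \<Rightarrow> 'n \<Rightarrow> real ^ 'n" where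
  "zero_at z i = (\<chi> j. if j = i then 0 else z $ j)"

definition K_mech :: "('n::finite) query \<Rightarrow> real ^ 'n \<Rightarrow> real measure" where
  "K_mech Q x = distr (laplace (lap_scale (snd Q))) borel
                   (\<lambda>r. (\<Sum>j\<in>UNIV. fst Q $ j * x $ j) + r)"

definition price_det :: "real \<Rightarrow> real \<Rightarrow> real \<Rightarrow> real ^ ('n::finite) \<Rightarrow> 'n query \<Rightarrow> real" where
  "price_det \<gamma> \<delta> b' c Q =
     \<gamma> * b' / (lap_scale (snd Q) * (b' - \<delta>)) * (\<Sum>j\<in>UNIV. c $ j * \<bar>fst Q $ j\<bar>)"

definition K'_mech :: "real \<Rightarrow> real \<Rightarrow> real \<Rightarrow> ('n::finite) query \<Rightarrow> real ^ 'n \<Rightarrow> real measure" where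
  "K'_mech \<gamma> \<delta> b' Q c = distr (laplace b') borel (\<lambda>r. price_det \<gamma> \<delta> b' c Q + r)"

text \<open>|log (p1/p2)| with the conventions log(p/0) = infinity for p > 0 (and pairs
  with p1 = p2 = 0 are excluded from the suprema below).\<close>
definition logratio :: "real \<Rightarrow> real \<Rightarrow> ereal" where
  "logratio p1 p2 = (if 0 < p1 \<and> 0 < p2 then ereal \<bar>ln (p1 / p2)\<bar> else \<infinity>)"

definition eps_K :: "real set \<Rightarrow> ('n::finite) query \<Rightarrow> 'n \<Rightarrow> ereal" where
  "eps_K X Q i = Sup {logratio (measure (K_mech Q x) S) (measure (K_mech Q (zero_at x i)) S) | S x.
       S \<in> sets borel \<and> (\<forall>j. x $ j \<in> X) \<and>
       (0 < measure (K_mech Q x) S \<or> 0 < measure (K_mech Q (zero_at x i)) S)}"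

definition eps_K' :: "real \<Rightarrow> real \<Rightarrow> real \<Rightarrow> real set \<Rightarrow> ('n::finite) query \<Rightarrow> 'n \<Rightarrow> ereal" where
  "eps_K' \<gamma> \<delta> b' Y Q i = Sup {logratio (measure (K'_mech \<gamma> \<delta> b' Q c) S)
                                        (measure (K'_mech \<gamma> \<delta> b' Q (zero_at c i)) S) | S c.
       S \<in> sets borel \<and> (\<forall>j. c $ j \<in> Y) \<and>
       (0 < measure (K'_mech \<gamma> \<delta> b' Q c) S \<or> 0 < measure (K'_mech \<gamma> \<delta> b' Q (zero_at c i)) S)}"

text \<open>Randomized price pi(Q) as a function of the noise rho' = r.\<close>
definition rand_price :: "real \<Rightarrow> real \<Rightarrow> real \<Rightarrow> real ^ ('n::finite) \<Rightarrow> 'n query \<Rightarrow> real \<Rightarrow> real" where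
  "rand_price \<gamma> \<delta> b' c Q r = price_det \<gamma> \<delta> b' c Q + r"

definition micro :: "real \<Rightarrow> real \<Rightarrow> real \<Rightarrow> real ^ ('n::finite) \<Rightarrow> 'n query \<Rightarrow> 'n \<Rightarrow> real \<Rightarrow> real" where
  "micro \<gamma> \<delta> b' c Q i r =
     (let b = lap_scale (snd Q);
          s = \<gamma> * \<bar>fst Q $ i\<bar>;
          s' = \<gamma> * b' * \<delta> * \<bar>fst Q $ i\<bar> / (b * (b' - \<delta>))
      in (s / b + s' / b') * c $ i
         + (rand_price \<gamma> \<delta> b' c Q r - price_det \<gamma> \<delta> b' c Q) / real CARD('n))"

definition E_price :: "real \<Rightarrow> real \<Rightarrow> real \<Rightarrow> real ^ ('n::finite) \<Rightarrow> 'n query \<Rightarrow> real" where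
  "E_price \<gamma> \<delta> b' c Q = integral\<^sup>L (laplace b') (rand_price \<gamma> \<delta> b' c Q)"

definition E_micro :: "real \<Rightarrow> real \<Rightarrow> real \<Rightarrow> real ^ ('n::finite) \<Rightarrow> 'n query \<Rightarrow> 'n \<Rightarrow> real" where
  "E_micro \<gamma> \<delta> b' c Q i = integral\<^sup>L (laplace b') (micro \<gamma> \<delta> b' c Q i)"

inductive determines :: "('n::finite) query multiset \<Rightarrow> 'n query \<Rightarrow> bool" where
  summation: "S \<noteq> {#} \<Longrightarrow> (\<forall>Q\<in>#S. 0 < snd Q) \<Longrightarrow>
      determines S (\<Sum>Q\<in>#S. fst Q, \<Sum>Q\<in>#S. snd Q)"
| scalar: "0 < v \<Longrightarrow> 0 < a\<^sup>2 * v \<Longrightarrow> determines {#(q, v)#} (a *s q, a\<^sup>2 * v)"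
| relax: "0 < v \<Longrightarrow> v \<le> v' \<Longrightarrow> determines {#(q, v)#} (q, v')"
| trans: "L \<noteq> [] \<Longrightarrow> (\<forall>p\<in>set L. determines (fst p) (snd p)) \<Longrightarrow>
      determines (mset (map snd L)) Q \<Longrightarrow>
      determines (sum_list (map fst L)) Q"

definition arbitrage_free :: "(('n::finite) query \<Rightarrow> real) \<Rightarrow> bool" where
  "arbitrage_free g \<longleftrightarrow>
     (\<forall>S Q. S \<noteq> {#} \<longrightarrow> (\<forall>Q'\<in>#S. 0 < snd Q') \<longrightarrow> 0 < snd Q \<longrightarrow> determines S Q
        \<longrightarrow> g Q \<le> (\<Sum>Q'\<in>#S. g Q'))"

end

theory Submission
  imports Defs
begin

lemma msum_div: "(\<Sum>x\<in>#S. g x) / (L::real) = (\<Sum>x\<in>#S. g x / L)"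
  by (induct S) (auto simp: add_divide_distrib)

lemma msum_nonneg: "(\<forall>x\<in>#S. 0 \<le> g x) \<Longrightarrow> 0 \<le> (\<Sum>x\<in>#S. (g x::real))"
  by (induct S) auto

lemma msum_ge_member: "x \<in># S \<Longrightarrow> (\<forall>y\<in>#S. 0 \<le> g y) \<Longrightarrow> g x \<le> (\<Sum>y\<in>#S. (g y::real))"
proof -
  assume "x \<in># S" "\<forall>y\<in>#S. 0 \<le> g y"
  then obtain S' where S: "S = add_mset x S'" by (metis multi_member_split)
  have "0 \<le> (\<Sum>y\<in>#S'. g y)" using \<open>\<forall>y\<in>#S. 0 \<le> g y\<close> S by (intro msum_nonneg) auto
  then show ?thesis using S by simp
qed

lemma msum_sum_list: "(\<Sum>x\<in>#sum_list Ms. g x) = (\<Sum>M\<leftarrow>Ms. (\<Sum>x\<in>#M. (g x::real)))"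
  by (induct Ms) auto

lemma mem_sum_list: "x \<in># sum_list Ms \<Longrightarrow> \<exists>M\<in>set Ms. x \<in># M"
  by (induct Ms) auto

lemma ls_pos: "0 < v \<Longrightarrow> 0 < lap_scale v"
  by (simp add: lap_scale_def)

lemma ls_mono: "v \<le> v' \<Longrightarrow> lap_scale v \<le> lap_scale v'"
  by (simp add: lap_scale_def)

lemma ls_scale: "lap_scale (a\<^sup>2 * v) = \<bar>a\<bar> * lap_scale v"
proof -
  have "a\<^sup>2 * v / 2 = a\<^sup>2 * (v / 2)" by simp
  then show ?thesis by (simp only: lap_scale_def real_sqrt_mult real_sqrt_abs)
qed

locale hnorm =
  fixes h :: "real ^ ('n::finite) \<Rightarrow> real"
  assumes h_nn: "\<And>q. 0 \<le> h q"
    and h_add: "\<And>q r. h (q + r) \<le> h q + h r"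
    and h_scale: "\<And>a q. h (a *s q) = \<bar>a\<bar> * h q"
begin

lemma h_zero: "h 0 = 0"
  using h_scale[of 0 0] by simp

lemma h_msum: "h (\<Sum>Q\<in>#S. fst Q) \<le> (\<Sum>Q\<in>#S. h (fst Q))"
proof (induct S)
  case empty then show ?case by (simp add: h_zero)
next
  case (add x S)
  then show ?case using h_add[of "fst x" "\<Sum>Q\<in>#S. fst Q"] by simp
qed

definition f :: "'n query \<Rightarrow> real" where
  "f Q = h (fst Q) / lap_scale (snd Q)"

lemma det_core:
  "determines S Q \<Longrightarrow> S \<noteq> {#} \<and> (\<forall>Q'\<in>#S. 0 < snd Q') \<and> 0 < snd Q \<and> f Q \<le> (\<Sum>Q'\<in>#S. f Q')"
proof (induct rule: determines.induct)
  case (summation S)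
  then obtain x where x: "x \<in># S" by blast
  have nn: "\<forall>y\<in>#S. 0 \<le> snd y" using summation by auto
  have le: "\<And>y. y \<in># S \<Longrightarrow> snd y \<le> (\<Sum>Q\<in>#S. snd Q)"
    using nn msum_ge_member[of _ S snd] by auto
  have pos: "0 < (\<Sum>Q\<in>#S. snd Q)" using le[OF x] summation x by force
  let ?L = "lap_scale (\<Sum>Q\<in>#S. snd Q)"
  have Lp: "0 < ?L" using pos by (rule ls_pos)
  have "f (\<Sum>Q\<in>#S. fst Q, \<Sum>Q\<in>#S. snd Q) = h (\<Sum>Q\<in>#S. fst Q) / ?L" by (simp add: f_def)
  also have "\<dots> \<le> (\<Sum>Q\<in>#S. h (fst Q)) / ?L"
    using h_msum[of S] Lp by (intro divide_right_mono) auto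
  also have "\<dots> = (\<Sum>Q\<in>#S. h (fst Q) / ?L)" by (rule msum_div)
  also have "\<dots> \<le> (\<Sum>Q\<in>#S. f Q)"
  proof (rule sum_mset_mono)
    fix y assume y: "y \<in># S"
    have "0 < lap_scale (snd y)" using summation y by (auto intro: ls_pos)
    moreover have "lap_scale (snd y) \<le> ?L" using le[OF y] by (rule ls_mono)
    ultimately show "h (fst y) / ?L \<le> f y"
      unfolding f_def by (intro divide_left_mono h_nn) auto
  qed
  finally show ?case using summation pos by simp
next
  case (scalar v a q)
  then have "a \<noteq> 0" by auto
  then show ?case using scalar
    by (simp add: f_def h_scale ls_scale)
next
  case (relax v v' q)
  have "h q / lap_scale v' \<le> h q / lap_scale v"
    using relax by (intro divide_left_mono h_nn ls_mono) (auto intro: ls_pos mult_pos_pos ls_pos order_less_le_trans)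
  then show ?case using relax by (simp add: f_def)
next
  case (trans L Q)
  have ne: "sum_list (map fst L) \<noteq> {#}"
    using trans(1,2) by (cases L) auto
  have mem: "\<forall>Q'\<in>#sum_list (map fst L). 0 < snd Q'"
    using trans(2) by (auto dest!: mem_sum_list)
  have "f Q \<le> (\<Sum>Q'\<in>#mset (map snd L). f Q')" using trans by blast
  also have "\<dots> = (\<Sum>p\<leftarrow>L. f (snd p))"
    by (induct L) auto
  also have "\<dots> \<le> (\<Sum>p\<leftarrow>L. (\<Sum>Q'\<in>#fst p. f Q'))"
    using trans(2) by (intro sum_list_mono) blast
  also have "\<dots> = (\<Sum>Q'\<in>#sum_list (map fst L). f Q')"
    by (simp add: msum_sum_list o_def)
  finally show ?case using ne mem trans by blast
qed

lemma af:
  assumes "K \<ge> 0" and "\<And>Q. 0 < snd Q \<Longrightarrow> g Q = K * f Q"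
  shows "arbitrage_free g"
  unfolding arbitrage_free_def
proof (intro allI impI)
  fix S :: "'n query multiset" and Q :: "'n query" assume S: "(\<forall>Q'\<in>#S. 0 < snd Q')" and Q: "0 < snd Q" and d: "determines S Q"
  have "g Q = K * f Q" using assms Q by simp
  also have "\<dots> \<le> K * (\<Sum>Q'\<in>#S. f Q')" using det_core[OF d] assms(1) by (simp add: mult_left_mono)
  also have "\<dots> = (\<Sum>Q'\<in>#S. K * f Q')" by (simp add: sum_mset_distrib_left)
  also have "\<dots> = (\<Sum>Q'\<in>#S. g Q')" using S assms(2) by (intro arg_cong[where f=sum_mset] image_mset_cong) auto
  finally show "g Q \<le> (\<Sum>Q'\<in>#S. g Q')" .
qed
end

lemma exp_half:
  assumes b: "0 < (b::real)"
  shows "(\<integral>\<^sup>+x. ennreal (exp (- x)) * indicator {0..} x \<partial>lborel) = 1"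
  using nn_intergal_power_times_exp_Ici[of 0] by simp

lemma lap_norm:
  assumes b: "0 < (b::real)"
  shows "(\<integral>\<^sup>+t. ennreal (exp (- \<bar>t\<bar> / b)) \<partial>lborel) = ennreal (2 * b)"
proof -
  have I: "(\<integral>\<^sup>+x. ennreal (exp (- x)) * indicator {0..} x \<partial>lborel) = 1"
    using nn_intergal_power_times_exp_Ici[of 0] by simp
  have eq: "\<And>t. ennreal (exp (- \<bar>t\<bar> / b)) =
      ennreal (exp (- t / b)) * indicator {0..} t + ennreal (exp (t / b)) * indicator {..<0} t"
    by (auto split: split_indicator)
  have A: "(\<integral>\<^sup>+t. ennreal (exp (- t / b)) * indicator {0..} t \<partial>lborel) = ennreal b"
  proof -
    have "(\<integral>\<^sup>+t. ennreal (exp (- t / b)) * indicator {0..} t \<partial>lborel)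
        = ennreal \<bar>b\<bar> * (\<integral>\<^sup>+x. ennreal (exp (- (0 + b * x) / b)) * indicator {0..} (0 + b * x) \<partial>lborel)"
      using b by (intro nn_integral_real_affine) auto
    also have "(\<integral>\<^sup>+x. ennreal (exp (- (0 + b * x) / b)) * indicator {0..} (0 + b * x) \<partial>lborel)
        = (\<integral>\<^sup>+x. ennreal (exp (- x)) * indicator {0..} x \<partial>lborel)"
      using b by (intro nn_integral_cong) (auto split: split_indicator simp: zero_le_mult_iff)
    finally show ?thesis using I b by simp
  qed
  have B: "(\<integral>\<^sup>+t. ennreal (exp (t / b)) * indicator {..<0} t \<partial>lborel) = ennreal b"
  proof -
    have "(\<integral>\<^sup>+t. ennreal (exp (t / b)) * indicator {..<0} t \<partial>lborel)
        = ennreal \<bar>-b\<bar> * (\<integral>\<^sup>+x. ennreal (exp ((0 + -b * x) / b)) * indicator {..<0} (0 + -b * x) \<partial>lborel)"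
      using b by (intro nn_integral_real_affine) auto
    also have "(\<integral>\<^sup>+x. ennreal (exp ((0 + -b * x) / b)) * indicator {..<0} (0 + -b * x) \<partial>lborel)
        = (\<integral>\<^sup>+x. ennreal (exp (- x)) * indicator {0..} x \<partial>lborel)"
    proof (intro nn_integral_cong_AE)
      show "AE x in lborel. ennreal (exp ((0 + - b * x) / b)) * indicator {..<0} (0 + - b * x) =
         ennreal (exp (- x)) * indicator {0..} x"
        using AE_lborel_singleton[of 0]
        by eventually_elim (use b in \<open>auto split: split_indicator simp: mult_less_0_iff zero_less_mult_iff\<close>)
    qed
    finally show ?thesis using I b by simp
  qed
  have "(\<integral>\<^sup>+t. ennreal (exp (- \<bar>t\<bar> / b)) \<partial>lborel) =
     (\<integral>\<^sup>+t. ennreal (exp (- t / b)) * indicator {0..} t + ennreal (exp (t / b)) * indicator {..<0} t \<partial>lborel)"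
    by (simp only: eq)
  also have "\<dots> = (\<integral>\<^sup>+t. ennreal (exp (- t / b)) * indicator {0..} t \<partial>lborel)
      + (\<integral>\<^sup>+t. ennreal (exp (t / b)) * indicator {..<0} t \<partial>lborel)"
    by (intro nn_integral_add) auto
  also have "\<dots> = ennreal (2 * b)" using A B b by (simp add: ennreal_plus[symmetric] del: ennreal_plus)
  finally show ?thesis .
qed

lemma lap_prob:
  assumes b: "0 < (b::real)"
  shows "prob_space (laplace b)"
proof (rule prob_spaceI)
  have "emeasure (laplace b) (space (laplace b)) =
      (\<integral>\<^sup>+t. ennreal (1 / (2 * b)) * ennreal (exp (- \<bar>t\<bar> / b)) \<partial>lborel)"
    unfolding laplace_def using b
    by (subst emeasure_density) (auto intro!: nn_integral_cong simp: ennreal_mult[symmetric])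
  also have "\<dots> = ennreal (1 / (2 * b)) * ennreal (2 * b)"
    using b lap_norm[OF b] by (subst nn_integral_cmult) auto
  also have "\<dots> = 1" using b by (simp add: ennreal_mult[symmetric])
  finally show "emeasure (laplace b) (space (laplace b)) = 1" .
qed

lemma lap_mean0:
  assumes b: "0 < (b::real)"
  shows "integral\<^sup>L (laplace b) (\<lambda>r. r) = 0"
proof -
  define h where "h = (\<lambda>t. exp (- \<bar>t\<bar> / b) / (2 * b) * t)"
  have 1: "integral\<^sup>L (laplace b) (\<lambda>r. r) = integral\<^sup>L lborel h"
    unfolding laplace_def h_def
  proof (subst integral_density)
    show "(\<lambda>r. r) \<in> borel_measurable lborel" by simp
    show "(\<lambda>t. exp (- \<bar>t\<bar> / b) / (2 * b)) \<in> borel_measurable lborel" by measurable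
    show "AE x in lborel. 0 \<le> exp (- \<bar>x\<bar> / b) / (2 * b)" using b by simp
  qed simp
  have 2: "integral\<^sup>L lborel h = \<bar>-1\<bar> *\<^sub>R integral\<^sup>L lborel (\<lambda>x. h (0 + -1 * x))"
    by (rule lborel_integral_real_affine) simp
  have 3: "(\<lambda>x. h (0 + -1 * x)) = (\<lambda>x. - h x)" by (auto simp: h_def)
  have "integral\<^sup>L lborel h = - integral\<^sup>L lborel h"
    using 2 unfolding 3 by (simp only: integral_minus abs_minus_cancel abs_one scaleR_one)
  then have "integral\<^sup>L lborel h = 0" by linarith
  with 1 show ?thesis by simp
qed

lemma lap_int:
  assumes b: "0 < (b::real)"
  shows "integrable (laplace b) (\<lambda>r. r)"
proof -
  have maj: "integrable lborel (\<lambda>x. exp (- \<bar>x\<bar> / (2 * b)))"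
    using b lap_norm[of "2 * b"] by (subst integrable_iff_bounded) auto
  have "integrable lborel (\<lambda>x. exp (- \<bar>x\<bar> / b) / (2 * b) * x)"
  proof (rule Bochner_Integration.integrable_bound[OF maj])
    show "AE x in lborel. norm (exp (- \<bar>x\<bar> / b) / (2 * b) * x) \<le> norm (exp (- \<bar>x\<bar> / (2 * b)))"
    proof (rule AE_I2)
      fix x :: real
      have e: "\<bar>x\<bar> / (2 * b) \<le> exp (\<bar>x\<bar> / (2 * b))"
        using exp_ge_add_one_self[of "\<bar>x\<bar> / (2 * b)"] by linarith
      have "norm (exp (- \<bar>x\<bar> / b) / (2 * b) * x) = (\<bar>x\<bar> / (2 * b)) * exp (- \<bar>x\<bar> / b)"
        using b by (simp add: abs_mult)
      also have "\<dots> \<le> exp (\<bar>x\<bar> / (2 * b)) * exp (- \<bar>x\<bar> / b)"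
        using e by (intro mult_right_mono) auto
      also have "\<dots> = exp (- \<bar>x\<bar> / (2 * b))"
        using b by (simp add: exp_add[symmetric] field_simps)
      finally show "norm (exp (- \<bar>x\<bar> / b) / (2 * b) * x) \<le> norm (exp (- \<bar>x\<bar> / (2 * b)))" by simp
    qed
  qed auto
  then show ?thesis
    unfolding laplace_def using b by (subst integrable_density) auto
qed

lemma shift_emeasure:
  assumes b: "0 < (b::real)" and S: "S \<in> sets borel"
  shows "emeasure (distr (laplace b) borel (\<lambda>r. a + r)) S =
    (\<integral>\<^sup>+u. ennreal (exp (- \<bar>u - a\<bar> / b) / (2 * b)) * indicator S u \<partial>lborel)"
proof -
  have m: "(\<lambda>r. a + r) \<in> measurable (laplace b) borel"
    unfolding laplace_def by simp
  have "emeasure (distr (laplace b) borel (\<lambda>r. a + r)) S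
      = emeasure (laplace b) ((\<lambda>r. a + r) -` S \<inter> space (laplace b))"
    using m S by (rule emeasure_distr)
  also have "\<dots> = (\<integral>\<^sup>+t. ennreal (exp (- \<bar>t\<bar> / b) / (2 * b)) * indicator ((\<lambda>r. a + r) -` S) t \<partial>lborel)"
  proof -
    have "(\<lambda>r. a + r) \<in> borel_measurable borel" by simp
    from measurable_sets[OF this S] have "(\<lambda>r. a + r) -` S \<in> sets borel" by simp
    then show ?thesis unfolding laplace_def by (subst emeasure_density) auto
  qed
  also have "\<dots> = (\<integral>\<^sup>+t. ennreal (exp (- \<bar>(a + 1 * t) - a\<bar> / b) / (2 * b)) * indicator S (a + 1 * t) \<partial>lborel)"
    by (intro nn_integral_cong) (auto split: split_indicator)
  also have "\<dots> = (\<integral>\<^sup>+u. ennreal (exp (- \<bar>u - a\<bar> / b) / (2 * b)) * indicator S u \<partial>lborel)"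
    using nn_integral_real_affine[of "\<lambda>u. ennreal (exp (- \<bar>u - a\<bar> / b) / (2 * b)) * indicator S u" 1 a] S
    by simp
  finally show ?thesis .
qed

lemma shift_le:
  assumes b: "0 < (b::real)" and S: "S \<in> sets borel"
  shows "measure (distr (laplace b) borel (\<lambda>r. a + r)) S
     \<le> exp (\<bar>a - a'\<bar> / b) * measure (distr (laplace b) borel (\<lambda>r. a' + r)) S"
proof -
  have P: "prob_space (distr (laplace b) borel (\<lambda>r. c + r))" for c
    by (rule prob_space.prob_space_distr[OF lap_prob[OF b]]) (simp add: laplace_def)
  have pt: "exp (- \<bar>u - a\<bar> / b) / (2 * b) \<le> exp (\<bar>a - a'\<bar> / b) * (exp (- \<bar>u - a'\<bar> / b) / (2 * b))" for u
  proof -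
    have "- \<bar>u - a\<bar> / b \<le> \<bar>a - a'\<bar> / b + - \<bar>u - a'\<bar> / b"
      using b by (simp add: field_simps)
    then have "exp (- \<bar>u - a\<bar> / b) \<le> exp (\<bar>a - a'\<bar> / b) * exp (- \<bar>u - a'\<bar> / b)"
      by (simp add: exp_add[symmetric])
    then show ?thesis using b by (simp add: divide_right_mono)
  qed
  have "emeasure (distr (laplace b) borel (\<lambda>r. a + r)) S \<le>
     (\<integral>\<^sup>+u. ennreal (exp (\<bar>a - a'\<bar> / b)) * (ennreal (exp (- \<bar>u - a'\<bar> / b) / (2 * b)) * indicator S u) \<partial>lborel)"
    unfolding shift_emeasure[OF b S]
  proof (intro nn_integral_mono)
    fix u
    have "ennreal (exp (- \<bar>u - a\<bar> / b) / (2 * b)) \<le> ennreal (exp (\<bar>a - a'\<bar> / b) * (exp (- \<bar>u - a'\<bar> / b) / (2 * b)))"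
      by (rule ennreal_leI[OF pt])
    also have "\<dots> = ennreal (exp (\<bar>a - a'\<bar> / b)) * ennreal (exp (- \<bar>u - a'\<bar> / b) / (2 * b))"
      using b by (intro ennreal_mult) auto
    finally show "ennreal (exp (- \<bar>u - a\<bar> / b) / (2 * b)) * indicator S u \<le>
      ennreal (exp (\<bar>a - a'\<bar> / b)) * (ennreal (exp (- \<bar>u - a'\<bar> / b) / (2 * b)) * indicator S u)"
      by (auto split: split_indicator)
  qed
  also have "\<dots> = ennreal (exp (\<bar>a - a'\<bar> / b)) * emeasure (distr (laplace b) borel (\<lambda>r. a' + r)) S"
    unfolding shift_emeasure[OF b S] using S by (subst nn_integral_cmult) auto
  finally have "ennreal (measure (distr (laplace b) borel (\<lambda>r. a + r)) S) \<le>
      ennreal (exp (\<bar>a - a'\<bar> / b) * measure (distr (laplace b) borel (\<lambda>r. a' + r)) S)"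
    by (simp add: finite_measure.emeasure_eq_measure[OF prob_space.finite_measure[OF P]] ennreal_mult[symmetric])
  then show ?thesis by (subst (asm) ennreal_le_iff) auto
qed

lemma logratio_le:
  assumes "0 \<le> m1" "0 \<le> m2" "m1 \<le> exp D * m2" "m2 \<le> exp D * m1" "0 < m1 \<or> 0 < m2"
  shows "logratio m1 m2 \<le> ereal D"
proof -
  have p1: "0 < m1"
  proof (rule ccontr)
    assume "\<not> 0 < m1"
    then have z: "m1 = 0" using assms(1) by simp
    then have "m2 \<le> 0" using assms(4) by simp
    then show False using assms(2,5) z by simp
  qed
  have p2: "0 < m2"
  proof (rule ccontr)
    assume "\<not> 0 < m2"
    then have z: "m2 = 0" using assms(2) by simp
    then have "m1 \<le> 0" using assms(3) by simp
    then show False using assms(1,5) z by simp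
  qed
  have "ln (m1 / m2) \<le> D"
  proof -
    have "m1 / m2 \<le> exp D" using assms(3) p2 by (simp add: divide_le_eq)
    then have "ln (m1 / m2) \<le> ln (exp D)" using p1 p2 by (subst ln_le_cancel_iff) auto
    then show ?thesis by simp
  qed
  moreover have "ln (m2 / m1) \<le> D"
  proof -
    have "m2 / m1 \<le> exp D" using assms(4) p1 by (simp add: divide_le_eq)
    then have "ln (m2 / m1) \<le> ln (exp D)" using p1 p2 by (subst ln_le_cancel_iff) auto
    then show ?thesis by simp
  qed
  moreover have "ln (m2 / m1) = - ln (m1 / m2)" using p1 p2 by (simp add: ln_div)
  ultimately show ?thesis using p1 p2 unfolding logratio_def by simp
qed

lemma sum_zero_at:
  fixes F :: "'n::finite \<Rightarrow> real \<Rightarrow> real"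
  shows "(\<Sum>j\<in>UNIV. F j (z $ j)) - (\<Sum>j\<in>UNIV. F j (zero_at z i $ j)) = F i (z $ i) - F i 0"
proof -
  have "(\<Sum>j\<in>UNIV. F j (z $ j)) = (\<Sum>j\<in>UNIV. F j (zero_at z i $ j) + (if j = i then F i (z $ i) - F i 0 else 0))"
    by (intro sum.cong) (auto simp: zero_at_def)
  also have "\<dots> = (\<Sum>j\<in>UNIV. F j (zero_at z i $ j)) + (F i (z $ i) - F i 0)"
    by (simp add: sum.distrib)
  finally show ?thesis by simp
qed

lemma sup_abs_upper:
  assumes "bounded (X::real set)" "x \<in> X"
  shows "\<bar>x\<bar> \<le> (SUP x\<in>X. \<bar>x\<bar>)"
proof (rule cSUP_upper[OF assms(2)])
  from assms(1) obtain M where "\<forall>x\<in>X. \<bar>x\<bar> \<le> M" by (auto simp: bounded_real)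
  then show "bdd_above ((\<lambda>x. \<bar>x\<bar>) ` X)" by (auto intro!: bdd_aboveI)
qed

lemma both_le:
  assumes b: "0 < b" and S: "S \<in> sets borel" and d: "\<bar>a - a'\<bar> / b \<le> D"
  shows "measure (distr (laplace b) borel (\<lambda>r. a + r)) S
     \<le> exp D * measure (distr (laplace b) borel (\<lambda>r. a' + r)) S"
    "measure (distr (laplace b) borel (\<lambda>r. a' + r)) S
     \<le> exp D * measure (distr (laplace b) borel (\<lambda>r. a + r)) S"
proof -
  have e: "exp (\<bar>a - a'\<bar> / b) \<le> exp D" "exp (\<bar>a' - a\<bar> / b) \<le> exp D" using d by (auto simp: abs_minus_commute)
  show "measure (distr (laplace b) borel (\<lambda>r. a + r)) S
     \<le> exp D * measure (distr (laplace b) borel (\<lambda>r. a' + r)) S"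
    using shift_le[OF b S, of a a'] e(1) by (meson measure_nonneg mult_right_mono order_trans)
  show "measure (distr (laplace b) borel (\<lambda>r. a' + r)) S
     \<le> exp D * measure (distr (laplace b) borel (\<lambda>r. a + r)) S"
    using shift_le[OF b S, of a' a] e(2) by (meson measure_nonneg mult_right_mono order_trans)
qed

lemma epsK_le:
  assumes X: "bounded X" and v: "0 < snd Q"
  shows "eps_K X Q i \<le> ereal (gam X * \<bar>fst Q $ i\<bar> / lap_scale (snd Q))"
  unfolding eps_K_def
proof (rule Sup_least, clarify)
  fix S x assume S: "S \<in> sets borel" and x: "\<forall>j. x $ j \<in> X"
    and pos: "0 < measure (K_mech Q x) S \<or> 0 < measure (K_mech Q (zero_at x i)) S"
  let ?b = "lap_scale (snd Q)"
  have b: "0 < ?b" using v by (rule ls_pos)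
  let ?a = "\<Sum>j\<in>UNIV. fst Q $ j * x $ j" and ?a' = "\<Sum>j\<in>UNIV. fst Q $ j * zero_at x i $ j"
  have "?a - ?a' = fst Q $ i * x $ i" using sum_zero_at[of "\<lambda>j t. fst Q $ j * t" x i] by simp
  moreover have "\<bar>x $ i\<bar> \<le> gam X" unfolding gam_def using X x by (intro sup_abs_upper) auto
  ultimately have "\<bar>?a - ?a'\<bar> \<le> gam X * \<bar>fst Q $ i\<bar>"
    by (metis abs_ge_zero abs_mult mult.commute mult_right_mono)
  then have d: "\<bar>?a - ?a'\<bar> / ?b \<le> gam X * \<bar>fst Q $ i\<bar> / ?b" using b by (simp add: divide_right_mono)
  show "logratio (measure (K_mech Q x) S) (measure (K_mech Q (zero_at x i)) S)
          \<le> ereal (gam X * \<bar>fst Q $ i\<bar> / lap_scale (snd Q))"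
  proof -
    have m1: "K_mech Q x = distr (laplace ?b) borel (\<lambda>r. ?a + r)" by (simp add: K_mech_def)
    have m2: "K_mech Q (zero_at x i) = distr (laplace ?b) borel (\<lambda>r. ?a' + r)" by (simp add: K_mech_def)
    show ?thesis unfolding m1 m2
      by (rule logratio_le[OF measure_nonneg measure_nonneg both_le(1)[OF b S d] both_le(2)[OF b S d] pos[unfolded m1 m2]])
  qed
qed

lemma epsK'_le:
  assumes Y: "bounded Y" "Y \<subseteq> {0..}" and v: "0 < snd Q" and g: "0 \<le> \<gamma>" and bd: "del Y < b'"
  shows "eps_K' \<gamma> (del Y) b' Y Q i \<le> ereal (\<gamma> * del Y * \<bar>fst Q $ i\<bar> / (lap_scale (snd Q) * (b' - del Y)))"
  unfolding eps_K'_def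
proof (rule Sup_least, clarify)
  fix S c assume S: "S \<in> sets borel" and c: "\<forall>j. c $ j \<in> Y"
    and pos: "0 < measure (K'_mech \<gamma> (del Y) b' Q c) S \<or> 0 < measure (K'_mech \<gamma> (del Y) b' Q (zero_at c i)) S"
  let ?b = "lap_scale (snd Q)" and ?d = "del Y"
  have b: "0 < ?b" using v by (rule ls_pos)
  have ca: "\<bar>c $ i\<bar> \<le> ?d" unfolding del_def by (rule sup_abs_upper) (use Y c in auto)
  have ci: "0 \<le> c $ i" "c $ i \<le> ?d" using c Y ca by auto
  then have b': "0 < b'" using bd by linarith
  let ?K = "\<gamma> * b' / (?b * (b' - ?d))"
  have K: "0 \<le> ?K" using g b bd b' by simp
  let ?a = "price_det \<gamma> ?d b' c Q" and ?a' = "price_det \<gamma> ?d b' (zero_at c i) Q"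
  have "?a - ?a' = ?K * (c $ i * \<bar>fst Q $ i\<bar>)"
    unfolding price_det_def right_diff_distrib[symmetric]
    using sum_zero_at[of "\<lambda>j t. t * \<bar>fst Q $ j\<bar>" c i] by simp
  then have "\<bar>?a - ?a'\<bar> / b' = \<gamma> * c $ i * \<bar>fst Q $ i\<bar> / (?b * (b' - ?d))"
    using K ci b' g b bd by (simp add: abs_mult)
  also have "\<dots> \<le> \<gamma> * ?d * \<bar>fst Q $ i\<bar> / (?b * (b' - ?d))"
    using ci g b bd by (intro divide_right_mono mult_right_mono mult_left_mono) auto
  finally have d: "\<bar>?a - ?a'\<bar> / b' \<le> \<gamma> * ?d * \<bar>fst Q $ i\<bar> / (?b * (b' - ?d))" .
  show "logratio (measure (K'_mech \<gamma> (del Y) b' Q c) S) (measure (K'_mech \<gamma> (del Y) b' Q (zero_at c i)) S)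
          \<le> ereal (\<gamma> * del Y * \<bar>fst Q $ i\<bar> / (lap_scale (snd Q) * (b' - del Y)))"
  proof -
    have m1: "K'_mech \<gamma> (del Y) b' Q c = distr (laplace b') borel (\<lambda>r. ?a + r)" by (simp add: K'_mech_def)
    have m2: "K'_mech \<gamma> (del Y) b' Q (zero_at c i) = distr (laplace b') borel (\<lambda>r. ?a' + r)" by (simp add: K'_mech_def)
    show ?thesis unfolding m1 m2
      by (rule logratio_le[OF measure_nonneg measure_nonneg both_le(1)[OF b' S d] both_le(2)[OF b' S d] pos[unfolded m1 m2]])
  qed
qed

lemma E_price_eq:
  assumes b': "0 < b'"
  shows "E_price \<gamma> \<delta> b' c Q = price_det \<gamma> \<delta> b' c Q"
proof -
  have P: "prob_space (laplace b')" by (rule lap_prob[OF b'])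
  have "E_price \<gamma> \<delta> b' c Q = integral\<^sup>L (laplace b') (\<lambda>r. price_det \<gamma> \<delta> b' c Q + r)"
    unfolding E_price_def rand_price_def[abs_def] ..
  also have "\<dots> = integral\<^sup>L (laplace b') (\<lambda>r. price_det \<gamma> \<delta> b' c Q) + integral\<^sup>L (laplace b') (\<lambda>r. r)"
    by (rule Bochner_Integration.integral_add) (use P lap_int[OF b'] in \<open>auto intro: finite_measure.integrable_const prob_space.finite_measure\<close>)
  also have "\<dots> = price_det \<gamma> \<delta> b' c Q"
    using prob_space.prob_space[OF P] lap_mean0[OF b'] by simp
  finally show ?thesis .
qed

lemma E_micro_eq:
  assumes b': "0 < b'"
  shows "E_micro \<gamma> \<delta> b' c Q i =
    (\<gamma> * \<bar>fst Q $ i\<bar> / lap_scale (snd Q)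
     + \<gamma> * b' * \<delta> * \<bar>fst Q $ i\<bar> / (lap_scale (snd Q) * (b' - \<delta>)) / b') * c $ i"
    (is "_ = ?A")
proof -
  have P: "prob_space (laplace b')" by (rule lap_prob[OF b'])
  have "E_micro \<gamma> \<delta> b' c Q i = integral\<^sup>L (laplace b') (\<lambda>r. ?A + r / real CARD('a))"
  proof -
    have "micro \<gamma> \<delta> b' c Q i = (\<lambda>r. ?A + r / real CARD('a))"
      by (rule ext) (simp add: micro_def rand_price_def Let_def)
    then show ?thesis unfolding E_micro_def by simp
  qed
  also have "\<dots> = integral\<^sup>L (laplace b') (\<lambda>r. ?A) + integral\<^sup>L (laplace b') (\<lambda>r. r / real CARD('a))"
    by (rule Bochner_Integration.integral_add) (use P lap_int[OF b'] in \<open>auto intro: finite_measure.integrable_const prob_space.finite_measure\<close>)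
  also have "\<dots> = ?A"
    using prob_space.prob_space[OF P] lap_mean0[OF b'] by (simp add: integral_divide_zero)
  finally show ?thesis .
qed

theorem proposition12:
  fixes X Y :: "real set" and c :: "real ^ ('n::finite)" and b' :: real
  assumes "bounded X" and "X \<noteq> {}"
    and "bounded Y" and "Y \<subseteq> {0..}"
    and "\<forall>j. c $ j \<in> Y"
    and "b' > del Y"
  shows "arbitrage_free (\<lambda>Q. E_price (gam X) (del Y) b' c Q)
    \<and> (\<forall>i Q. 0 < snd Q \<longrightarrow> fst Q $ i = 0 \<longrightarrow> E_micro (gam X) (del Y) b' c Q i = 0)
    \<and> (\<forall>i. arbitrage_free (\<lambda>Q. E_micro (gam X) (del Y) b' c Q i))
    \<and> (\<forall>Q. 0 < snd Q \<longrightarrow>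
          (\<Sum>i\<in>UNIV. E_micro (gam X) (del Y) b' c Q i) \<le> E_price (gam X) (del Y) b' c Q)
    \<and> (\<forall>i Q. 0 < snd Q \<longrightarrow>
          ereal (E_micro (gam X) (del Y) b' c Q i)
            \<ge> ereal (c $ i) * (eps_K X Q i + eps_K' (gam X) (del Y) b' Y Q i))"
proof -
  define \<gamma> where "\<gamma> = gam X"
  define \<delta> where "\<delta> = del Y"
  obtain x0 where x0: "x0 \<in> X" using assms(2) by blast
  have g: "0 \<le> \<gamma>" unfolding \<gamma>_def gam_def
    using sup_abs_upper[OF assms(1) x0] by linarith
  have cY: "\<And>j. 0 \<le> c $ j \<and> c $ j \<le> \<delta>"
  proof -
    fix j
    have "\<bar>c $ j\<bar> \<le> \<delta>" unfolding \<delta>_def del_def by (rule sup_abs_upper) (use assms in auto)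
    then show "0 \<le> c $ j \<and> c $ j \<le> \<delta>" using assms(4,5) by auto
  qed
  have d0: "0 \<le> \<delta>" using cY by (meson order_trans)
  have bd: "\<delta> < b'" using assms(6) \<delta>_def by simp
  have b': "0 < b'" using d0 bd by linarith
  note Ep = E_price_eq[OF b']
  note Em = E_micro_eq[OF b']
  have micro_alt: "E_micro \<gamma> \<delta> b' c Q i = (\<gamma> * b' * c $ i / (b' - \<delta>)) * (\<bar>fst Q $ i\<bar> / lap_scale (snd Q))"
    if "0 < snd Q" for Q i
  proof -
    have "0 < lap_scale (snd Q)" using that by (rule ls_pos)
    then show ?thesis unfolding Em using b' bd by (simp add: field_simps)
  qed
  have price_alt: "E_price \<gamma> \<delta> b' c Q = (\<gamma> * b' / (b' - \<delta>)) * ((\<Sum>j\<in>UNIV. c $ j * \<bar>fst Q $ j\<bar>) / lap_scale (snd Q))" for Q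
    unfolding Ep price_det_def by (simp add: field_simps)
  interpret H1: hnorm "\<lambda>q. \<Sum>j\<in>UNIV. c $ j * \<bar>q $ j\<bar>"
  proof
    show "\<And>q. 0 \<le> (\<Sum>j\<in>UNIV. c $ j * \<bar>q $ j\<bar>)" using cY by (intro sum_nonneg) auto
    show "\<And>q r. (\<Sum>j\<in>UNIV. c $ j * \<bar>(q + r) $ j\<bar>) \<le> (\<Sum>j\<in>UNIV. c $ j * \<bar>q $ j\<bar>) + (\<Sum>j\<in>UNIV. c $ j * \<bar>r $ j\<bar>)"
      unfolding sum.distrib[symmetric] using cY
      by (intro sum_mono) (auto simp: distrib_left[symmetric] intro!: mult_left_mono abs_triangle_ineq)
    show "\<And>a q. (\<Sum>j\<in>UNIV. c $ j * \<bar>(a *s q) $ j\<bar>) = \<bar>a\<bar> * (\<Sum>j\<in>UNIV. c $ j * \<bar>q $ j\<bar>)"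
      by (simp add: sum_distrib_left abs_mult mult_ac)
  qed
  have A: "arbitrage_free (\<lambda>Q. E_price \<gamma> \<delta> b' c Q)"
    by (rule H1.af[where K="\<gamma> * b' / (b' - \<delta>)"]) (use g b' bd in \<open>auto simp: H1.f_def price_alt\<close>)
  have C: "arbitrage_free (\<lambda>Q. E_micro \<gamma> \<delta> b' c Q i)" for i
  proof -
    interpret H2: hnorm "\<lambda>q. \<bar>q $ i\<bar>"
      by standard (auto simp: abs_mult)
    show ?thesis
      by (rule H2.af[where K="\<gamma> * b' * c $ i / (b' - \<delta>)"]) (use g b' bd cY in \<open>auto simp: H2.f_def micro_alt\<close>)
  qed
  have B: "E_micro \<gamma> \<delta> b' c Q i = 0" if "fst Q $ i = 0" for Q i
    unfolding Em using that by simp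
  have Dd: "(\<Sum>i\<in>UNIV. E_micro \<gamma> \<delta> b' c Q i) \<le> E_price \<gamma> \<delta> b' c Q" if "0 < snd Q" for Q
  proof -
    have "(\<Sum>i\<in>UNIV. E_micro \<gamma> \<delta> b' c Q i) = (\<Sum>i\<in>UNIV. (\<gamma> * b' / (b' - \<delta>)) * (c $ i * \<bar>fst Q $ i\<bar> / lap_scale (snd Q)))"
      using that by (intro sum.cong) (auto simp: micro_alt)
    also have "\<dots> = E_price \<gamma> \<delta> b' c Q"
      unfolding price_alt by (simp add: sum_distrib_left sum_divide_distrib)
    finally show ?thesis by simp
  qed
  have E: "ereal (E_micro \<gamma> \<delta> b' c Q i) \<ge> ereal (c $ i) * (eps_K X Q i + eps_K' \<gamma> \<delta> b' Y Q i)"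
    if v: "0 < snd Q" for Q i
  proof -
    have e1: "eps_K X Q i \<le> ereal (\<gamma> * \<bar>fst Q $ i\<bar> / lap_scale (snd Q))"
      unfolding \<gamma>_def using epsK_le[OF assms(1) v] .
    have e2: "eps_K' \<gamma> \<delta> b' Y Q i \<le> ereal (\<gamma> * \<delta> * \<bar>fst Q $ i\<bar> / (lap_scale (snd Q) * (b' - \<delta>)))"
      unfolding \<delta>_def using epsK'_le[OF assms(3,4) v g] assms(6) by simp
    have "ereal (c $ i) * (eps_K X Q i + eps_K' \<gamma> \<delta> b' Y Q i)
        \<le> ereal (c $ i) * (ereal (\<gamma> * \<bar>fst Q $ i\<bar> / lap_scale (snd Q)) + ereal (\<gamma> * \<delta> * \<bar>fst Q $ i\<bar> / (lap_scale (snd Q) * (b' - \<delta>))))"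
      using cY[of i] by (intro ereal_mult_left_mono add_mono e1 e2) auto
    also have "\<dots> = ereal (E_micro \<gamma> \<delta> b' c Q i)"
      unfolding Em using b' bd ls_pos[OF v] by (simp add: field_simps)
    finally show ?thesis .
  qed
  show ?thesis using A B C Dd E unfolding \<gamma>_def \<delta>_def by blast
qed

end
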